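(* Let $V$ be a finite dimensional vector space over a field $\mathbb{K}$ of characteristic zero, and let $z$ be an element of $V\setminus\{0\}$ or of $\wedge^2V\setminus\{0\}$. Then $$\{u\in\widehat T\otimes\widehat T:\ [\Delta z,u]=0\}=\mathbb{K}[[z]]\otimes\mathbb{K}[[z]].$$
   Context: $\widehat T=\widehat T(V)=\prod_{m\ge0}V^{\otimes m}$ is the completed tensor algebra, with coproduct $\Delta$ for which elements of $V$ are primitive, so $\Delta z=z\otimes1+1\otimes z$; $\wedge^2V$ is viewed inside $V^{\otimes2}$ as antisymmetric tensors. Tensor products of completed algebras are the completed tensor products, and $\mathbb{K}[[z]]\subset\widehat T$ is the set of series $\sum_k c_kz^k$, $c_k\in\mathbb{K}$. *)

theory Defs
  imports Main
begin

text \<open>V has a finite basis indexed by the finite type 'b, so the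
completed tensor algebra is the algebra of noncommutative formal power series
'b list => 'k (coefficient of each word), and the completed tensor product
of two copies is 'b list * 'b list => 'k.\<close>

type_synonym ('b, 'k) tser = "'b list \<Rightarrow> 'k"
type_synonym ('b, 'k) tser2 = "'b list \<times> 'b list \<Rightarrow> 'k"

definition one1 :: "('b, 'k::field) tser" where
  "one1 w = (if w = [] then 1 else 0)"

definition mult1 :: "('b, 'k::field) tser \<Rightarrow> ('b, 'k) tser \<Rightarrow> ('b, 'k) tser" where
  "mult1 f g w = (\<Sum>i\<le>length w. f (take i w) * g (drop i w))"

primrec pow1 :: "('b, 'k::field) tser \<Rightarrow> nat \<Rightarrow> ('b, 'k) tser" where
  "pow1 z 0 = one1"
| "pow1 z (Suc n) = mult1 z (pow1 z n)"

text \<open>Product in the completed tensor product (a(x)b)(c(x)d) = ac (x) bd.\<close>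
definition mult2 :: "('b, 'k::field) tser2 \<Rightarrow> ('b, 'k) tser2 \<Rightarrow> ('b, 'k) tser2" where
  "mult2 f g uv = (\<Sum>i\<le>length (fst uv). \<Sum>j\<le>length (snd uv).
      f (take i (fst uv), take j (snd uv)) * g (drop i (fst uv), drop j (snd uv)))"

fun shuffle_count :: "'a list \<Rightarrow> 'a list \<Rightarrow> 'a list \<Rightarrow> nat" where
  "shuffle_count [] ys zs = (if ys = zs then 1 else 0)"
| "shuffle_count (x # xs) [] zs = (if x # xs = zs then 1 else 0)"
| "shuffle_count (x # xs) (y # ys) [] = 0"
| "shuffle_count (x # xs) (y # ys) (z # zs) =
     (if x = z then shuffle_count xs (y # ys) zs else 0) +
     (if y = z then shuffle_count (x # xs) ys zs else 0)"

text \<open>The coproduct for which elements of V are primitive (shuffle coproduct):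
Delta(w) = sum over splittings of the positions of w into two subwords u (x) v.\<close>
definition Delta :: "('b, 'k::field) tser \<Rightarrow> ('b, 'k) tser2" where
  "Delta f uv = (\<Sum>w\<in>shuffles (fst uv) (snd uv).
      of_nat (shuffle_count (fst uv) (snd uv) w) * f w)"

text \<open>Elements of V and of wedge^2 V (antisymmetric tensors in V(x)V) inside T-hat.\<close>
definition in_V :: "('b, 'k::field) tser \<Rightarrow> bool" where
  "in_V z \<longleftrightarrow> (\<forall>w. length w \<noteq> 1 \<longrightarrow> z w = 0)"

definition in_wedge2 :: "('b, 'k::field) tser \<Rightarrow> bool" where
  "in_wedge2 z \<longleftrightarrow> (\<forall>w. length w \<noteq> 2 \<longrightarrow> z w = 0) \<and> (\<forall>a b. z [a, b] = - z [b, a])"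

text \<open>The element sum_{k,l} c k l * z^k (x) z^l of K[[z]] (x)^ K[[z]]; for z without
constant term, z^k vanishes on words of length < k, so the sums are finite.\<close>
definition pser2 :: "(nat \<Rightarrow> nat \<Rightarrow> 'k::field) \<Rightarrow> ('b, 'k) tser \<Rightarrow> ('b, 'k) tser2" where
  "pser2 c z uv = (\<Sum>k\<le>length (fst uv). \<Sum>l\<le>length (snd uv).
      c k l * pow1 z k (fst uv) * pow1 z l (snd uv))"

end

theory Submission
  imports Defs
begin


lemma sum_single:
  assumes "finite A" "a \<in> A" "\<And>i. i \<in> A \<Longrightarrow> i \<noteq> a \<Longrightarrow> f i = 0"
  shows "sum f A = f a"
proof -
  have "sum f A = f a + sum f (A - {a})" using assms(1,2) by (simp add: sum.remove)
  also have "sum f (A - {a}) = 0" using assms(3) by (intro sum.neutral) auto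
  finally show ?thesis by simp
qed

locale HZ =
  fixes z :: "'b list \<Rightarrow> 'k::field_char_0" and d :: nat and p :: "'b list"
  assumes hom: "\<And>w. length w \<noteq> d \<Longrightarrow> z w = 0"
    and dpos: "0 < d" and plen: "length p = d" and pnz: "z p \<noteq> 0"
    and base: "d = 1 \<or> (d = 2 \<and> (\<forall>a b. z [a, b] = - z [b, a]))"
begin

lemma ml_app: "length a = d \<Longrightarrow> mult1 z f (a @ b) = z a * f b"
  unfolding mult1_def
  by (subst sum_single[where a=d]) (auto simp: hom)

lemma mr_app: "length b = d \<Longrightarrow> mult1 f z (a @ b) = f a * z b"
  unfolding mult1_def
  by (subst sum_single[where a="length a"]) (auto simp: hom)

lemma ml_short: "length w < d \<Longrightarrow> mult1 z f w = 0"
  unfolding mult1_def by (intro sum.neutral) (auto simp: hom)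

lemma mr_short: "length w < d \<Longrightarrow> mult1 f z w = 0"
  unfolding mult1_def by (intro sum.neutral) (auto simp: hom)

lemma split_l: "d \<le> length w \<Longrightarrow> \<exists>a b. w = a @ b \<and> length a = d"
  by (rule exI[of _ "take d w"], rule exI[of _ "drop d w"]) auto

lemma split_r: "d \<le> length w \<Longrightarrow> \<exists>a b. w = a @ b \<and> length b = d"
  by (rule exI[of _ "take (length w - d) w"], rule exI[of _ "drop (length w - d) w"]) auto

lemma pow_l: "length a = d \<Longrightarrow> pow1 z (Suc k) (a @ b) = z a * pow1 z k b"
  by (simp add: ml_app)

lemma pow_supp: "pow1 z k w \<noteq> 0 \<Longrightarrow> length w = k * d"
proof (induction k arbitrary: w)
  case 0 then show ?case by (auto simp: one1_def split: if_splits)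
next
  case (Suc k)
  show ?case
  proof (cases "length w < d")
    case True then show ?thesis using Suc.prems ml_short[of w] by simp
  next
    case False
    then obtain a b where w: "w = a @ b" "length a = d" using split_l[of w] by auto
    have "pow1 z (Suc k) w = z a * pow1 z k b" using w pow_l by simp
    then have "pow1 z k b \<noteq> 0" using Suc.prems by auto
    then have "length b = k * d" using Suc.IH by blast
    then show ?thesis using w by simp
  qed
qed

lemma pow_r: "length b = d \<Longrightarrow> pow1 z (Suc k) (a @ b) = pow1 z k a * z b"
proof (induction k arbitrary: a)
  case 0
  show ?case
  proof (cases "a = []")
    case True
    then show ?thesis using ml_app[where a=b and b="[]" and f=one1] 0 by (simp add: one1_def)
  next
    case False
    then have "d \<le> length (a @ b)" "length (a @ b) \<noteq> Suc 0 * d" using 0 by auto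
    then have "pow1 z (Suc 0) (a @ b) = 0" using pow_supp[of "Suc 0" "a @ b"] by auto
    then show ?thesis using False by (simp add: one1_def)
  qed
next
  case (Suc k)
  show ?case
  proof (cases "length a < d")
    case True
    have "length (a @ b) \<ge> d" using Suc.prems by simp
    then obtain c e where ce: "a @ b = c @ e" "length c = d" using split_l[of "a @ b"] by auto
    have "length (c @ e) = length a + d" using ce(1)[symmetric] Suc.prems by simp
    then have "length e < d" using ce True by simp
    then have "pow1 z (Suc k) e = 0" using pow_supp[of "Suc k" e] by auto
    then have L: "pow1 z (Suc (Suc k)) (a @ b) = 0" using ce pow_l[of c "Suc k" e] by simp
    have "pow1 z (Suc k) a = 0" using pow_supp[of "Suc k" a] True by auto
    then show ?thesis using L by simp
  next
    case False
    then obtain c e where ce: "a = c @ e" "length c = d" using split_l[of a] by auto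
    have "pow1 z (Suc (Suc k)) (a @ b) = z c * pow1 z (Suc k) (e @ b)"
      using ce pow_l[of c "Suc k" "e @ b"] by simp
    also have "\<dots> = z c * (pow1 z k e * z b)" using Suc.IH[of e] Suc.prems by simp
    also have "\<dots> = pow1 z (Suc k) a * z b" using ce pow_l[of c k e] by simp
    finally show ?thesis .
  qed
qed

lemma pow1_one: "pow1 z (Suc 0) w = z w"
proof (cases "length w = d")
  case True
  then show ?thesis using pow_r[where a="[]" and b=w and k=0] by (simp add: one1_def)
next
  case False
  then show ?thesis using pow_supp[of "Suc 0" w] hom[of w] by auto
qed

definition pw :: "nat \<Rightarrow> 'b list" where "pw k = concat (replicate k p)"

lemma pw_len: "length (pw k) = k * d"
  by (induction k) (auto simp: pw_def plen)

lemma pw_val: "pow1 z k (pw k) = (z p) ^ k"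
  by (induction k) (auto simp: pw_def plen one1_def ml_app)

lemma pw_nz: "pow1 z k (pw k) \<noteq> 0"
  using pw_val pnz by simp

end


context HZ begin

definition C1 :: "('b list \<Rightarrow> 'k) \<Rightarrow> 'b list \<Rightarrow> 'k" where
  "C1 f w = mult1 z f w - mult1 f z w"

lemma C1_app: "length c = d \<Longrightarrow> length b = d \<Longrightarrow> c @ e = a @ b \<Longrightarrow>
   C1 f (c @ e) = z c * f e - f a * z b"
  unfolding C1_def using ml_app[of c f e] mr_app[of b f a] by simp

lemma C1_short: "length w < d \<Longrightarrow> C1 f w = 0"
  unfolding C1_def by (simp add: ml_short mr_short)

lemma G:
  "(\<forall>w. length w = n + d \<longrightarrow> C1 f w = lam * pow1 z (n div d + 1) w) \<Longrightarrow>
   (d dvd n \<longrightarrow> lam = 0) \<and> (\<exists>c. \<forall>w. length w = n \<longrightarrow> f w = c * pow1 z (n div d) w)"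
proof (induction n arbitrary: f lam rule: less_induct)
  case (less n)
  note hyp = less.prems
  show ?case
  proof (cases "d \<le> n")
    case True
    define m' where "m' = (n - d) div d"
    have mm: "n div d = Suc m'" using True dpos unfolding m'_def
      by (metis Suc_eq_plus1 add.commute div_add_self1 le_add_diff_inverse2 less_not_refl2)
    define f' where "f' a = f (p @ a) / z p" for a
    have S1: "f (a @ b) = f' a * z b + lam * pow1 z (n div d) (a @ b)"
      if ab: "length a = n - d" "length b = d" for a b
    proof -
      have "C1 f (p @ (a @ b)) = z p * f (a @ b) - f (p @ a) * z b"
        using C1_app[of p b "a @ b" "p @ a" f] plen ab by simp
      moreover have "C1 f (p @ (a @ b)) = lam * pow1 z (n div d + 1) (p @ (a @ b))"
        using hyp ab plen True by simp
      moreover have "pow1 z (n div d + 1) (p @ (a @ b)) = z p * pow1 z (n div d) (a @ b)"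
        using pow_l[of p "n div d" "a @ b"] plen by simp
      ultimately have "z p * f (a @ b) = f (p @ a) * z b + lam * (z p * pow1 z (n div d) (a @ b))"
        by (simp add: algebra_simps)
      then show ?thesis unfolding f'_def using pnz by (simp add: field_simps)
    qed
    have S2: "\<forall>w. length w = (n - d) + d \<longrightarrow> C1 f' w = lam * pow1 z ((n - d) div d + 1) w"
    proof (intro allI impI)
      fix w :: "'b list" assume wl: "length w = n - d + d"
      then have wl': "length w = n" using True by simp
      obtain c e where ce: "w = c @ e" "length c = d" using split_l[of w] wl' True by auto
      obtain a b where ab: "w = a @ b" "length b = d" using split_r[of w] wl' True by auto
      have l1: "length w = length c + length e" using ce(1) by simp
      have l2: "length w = length a + length b" using ab(1) by simp
      have le: "length e = n - d" "length a = n - d" using l1 l2 ce(2) ab(2) wl' by auto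
      have A1: "C1 f (c @ (e @ p)) = z c * f (e @ p) - f w * z p"
        using C1_app[of c p "e @ p" w f] ce plen by simp
      have A2: "C1 f (c @ (e @ p)) = lam * (pow1 z (n div d) w * z p)"
        using hyp ce plen wl' pow_r[of p "n div d" w] by simp
      have A3: "f (e @ p) = f' e * z p + lam * (pow1 z m' e * z p)"
        using S1[OF le(1) plen] pow_r[of p m' e] plen mm by simp
      have A4: "f w = f' a * z b + lam * pow1 z (n div d) w"
        using S1[OF le(2) ab(2)] ab by simp
      have A5: "pow1 z (n div d) w = z c * pow1 z m' e"
        using ce pow_l[of c m' e] mm by simp
      have A6: "C1 f' w = z c * f' e - f' a * z b"
        using C1_app[of c b e a f'] ce ab by simp
      have "z c * (f' e * z p + lam * (pow1 z m' e * z p)) - (f' a * z b + lam * (z c * pow1 z m' e)) * z p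
            = lam * (z c * pow1 z m' e * z p)"
        using A1 A2 A3 A4 A5 by simp
      then have "C1 f' w * z p = lam * pow1 z (n div d) w * z p"
        using A5 A6 by algebra
      then show "C1 f' w = lam * pow1 z ((n - d) div d + 1) w"
        using pnz mm m'_def by simp
    qed
    have "n - d < n" using True dpos by simp
    from less.IH[OF this S2] obtain c where
      I1: "d dvd (n - d) \<longrightarrow> lam = 0" and I2: "\<forall>a. length a = n - d \<longrightarrow> f' a = c * pow1 z m' a"
      unfolding m'_def by blast
    have "d dvd n \<longrightarrow> lam = 0" using I1 True by (simp add: dvd_minus_self)
    moreover have "\<forall>w. length w = n \<longrightarrow> f w = (c + lam) * pow1 z (n div d) w"
    proof (intro allI impI)
      fix w :: "'b list" assume wl: "length w = n"
      obtain a b where ab: "w = a @ b" "length b = d" using split_r[of w] wl True by auto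
      have "length w = length a + length b" using ab(1) by simp
      then have la: "length a = n - d" using ab(2) wl by auto
      have "f w = f' a * z b + lam * pow1 z (n div d) w" using S1[OF la ab(2)] ab by simp
      also have "f' a * z b = c * pow1 z (n div d) w"
        using I2 la ab pow_r[of b m' a] mm by simp
      finally show "f w = (c + lam) * pow1 z (n div d) w" by (simp add: algebra_simps)
    qed
    ultimately show ?thesis by blast
  next
    case False
    show ?thesis
    proof (cases "n = 0")
      case True
      have "C1 f (p @ []) = z p * f [] - f [] * z p"
        using C1_app[of p p "[]" "[]" f] plen by simp
      then have "C1 f p = 0" by simp
      moreover have "C1 f p = lam * pow1 z (Suc 0) p" using hyp plen True dpos by simp
      ultimately have "lam * z p = 0" using pow1_one by simp
      then have "lam = 0" using pnz by simp
      moreover have "\<forall>w. length w = n \<longrightarrow> f w = f [] * pow1 z (n div d) w"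
        using True by (simp add: one1_def)
      ultimately show ?thesis by blast
    next
      case nz: False
      have "d \<noteq> 1" using False nz by linarith
      with base have B: "d = 2 \<and> (\<forall>a b. z [a, b] = - z [b, a])" by blast
      have d2: "d = 2" using B by (rule conjunct1)
      have anti: "\<forall>a b. z [a, b] = - z [b, a]" using B by (rule conjunct2)
      have n1: "n = 1" using False nz d2 by linarith
      have h3: "z [x, y] * f [t] = f [x] * z [y, t]" for x y t
      proof -
        have "C1 f ([x, y] @ [t]) = z [x, y] * f [t] - f [x] * z [y, t]"
          using C1_app[of "[x, y]" "[y, t]" "[t]" "[x]" f] d2 by simp
        moreover have "C1 f [x, y, t] = lam * pow1 z (Suc 0) [x, y, t]"
          using hyp n1 d2 by simp
        moreover have "pow1 z (Suc 0) [x, y, t] = 0" using pow1_one hom d2 by simp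
        ultimately show ?thesis by simp
      qed
      have f0: "f [t] = 0" for t
      proof (rule ccontr)
        assume ft: "f [t] \<noteq> 0"
        have "z [t, y] = 0" for y
        proof -
          have "z [t, y] * f [t] = f [t] * z [y, t]" using h3 by simp
          then have "z [t, y] = z [y, t]" using ft by simp
          moreover have "z [y, t] = - z [t, y]" using anti by blast
          ultimately have "2 * z [t, y] = 0" by simp
          then show ?thesis by simp
        qed
        then have zz: "z [y, s] = 0" for y s using h3[of t y s] ft by simp
        have "\<exists>y s. p = [y, s]" using plen d2 by (auto simp: numeral_2_eq_2 length_Suc_conv)
        then obtain y s where "p = [y, s]" by blast
        then show False using zz pnz by simp
      qed
      have "\<forall>w. length w = n \<longrightarrow> f w = 0 * pow1 z (n div d) w"
        using n1 f0 by (auto simp: length_Suc_conv)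
      moreover have "\<not> d dvd n" using n1 d2 by simp
      ultimately show ?thesis by blast
    qed
  qed
qed

end


context HZ begin

lemma comm0:
  assumes "\<forall>w. C1 f w = 0"
  shows "\<exists>c. \<forall>w. length w = n \<longrightarrow> f w = c * pow1 z (n div d) w"
proof -
  have "\<forall>w. length w = n + d \<longrightarrow> C1 f w = 0 * pow1 z (n div d + 1) w" using assms by simp
  from G[OF this] show ?thesis by blast
qed

lemma ratio:
  fixes f P :: "'b list \<Rightarrow> 'k"
  assumes "\<exists>c. \<forall>w. length w = n \<longrightarrow> f w = c * P w" "length w0 = n" "P w0 \<noteq> 0" "length w = n"
  shows "f w = f w0 / P w0 * P w"
proof -
  obtain c where c: "\<forall>w. length w = n \<longrightarrow> f w = c * P w" using assms(1) by blast
  have "f w0 = c * P w0" using c assms(2) by blast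
  then have "c = f w0 / P w0" using assms(3) by simp
  then show ?thesis using c assms(4) by blast
qed

lemma Delta_z: "Delta z (x, v) = (if v = [] then z x else 0) + (if x = [] then z v else 0)"
proof (cases x)
  case Nil
  have "z [] = 0" using hom[of "[]"] dpos by simp
  then show ?thesis using Nil by (simp add: Delta_def)
next
  case (Cons a xs)
  note x = this
  show ?thesis
  proof (cases v)
    case Nil
    then show ?thesis using x by (simp add: Delta_def)
  next
    case (Cons b ys)
    note v = this
    show ?thesis
    proof (cases "xs = [] \<and> ys = [] \<and> d = 2")
      case True
      have "d \<noteq> 1" using True by simp
      then have anti: "\<forall>a b. z [a, b] = - z [b, a]" using base by blast
      have "z [a, b] = - z [b, a]" using anti by blast
      then have "z [a, b] + z [b, a] = 0" by simp
      moreover have "z [a, a] = 0"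
      proof -
        have "z [a, a] = - z [a, a]" using anti by blast
        then have "2 * z [a, a] = 0" by simp
        then show ?thesis by simp
      qed
      ultimately show ?thesis using x v True
        by (cases "a = b") (simp_all add: Delta_def add.commute)
    next
      case False
      have "Delta z (x, v) = 0" unfolding Delta_def
      proof (intro sum.neutral ballI)
        fix w assume "w \<in> shuffles (fst (x, v)) (snd (x, v))"
        then have "length w = length x + length v" using length_shuffles by simp
        moreover have "d = 1 \<or> d = 2" using base by blast
        ultimately have "length w \<noteq> d" using False x v by auto
        then show "of_nat (shuffle_count (fst (x, v)) (snd (x, v)) w) * z w = 0" using hom by simp
      qed
      then show ?thesis using x v by simp
    qed
  qed
qed

lemma C1_closed: "C1 (\<lambda>y. al (length y div d) * pow1 z (length y div d) y) x = 0"
proof (cases "length x < d")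
  case True then show ?thesis by (simp add: C1_short)
next
  case False
  obtain c e where ce: "x = c @ e" "length c = d" using split_l[of x] False by auto
  obtain a b where ab: "x = a @ b" "length b = d" using split_r[of x] False by auto
  have l1: "length x = length c + length e" using ce(1) by simp
  have l2: "length x = length a + length b" using ab(1) by simp
  have le: "length e = length x - d" "length a = length x - d" using l1 l2 ce(2) ab(2) by auto
  define r where "r = (length x - d) div d"
  define g where "g = (\<lambda>y::'b list. al (length y div d) * pow1 z (length y div d) y)"
  have eq: "c @ e = a @ b" using ce(1) ab(1) by simp
  have "C1 g x = C1 g (c @ e)" using ce(1) by simp
  also have "\<dots> = z c * g e - g a * z b" by (rule C1_app[OF ce(2) ab(2) eq])
  also have "\<dots> = z c * (al r * pow1 z r e) - al r * pow1 z r a * z b"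
    unfolding g_def r_def using le by simp
  also have "\<dots> = al r * (z c * pow1 z r e - pow1 z r a * z b)" by (simp add: algebra_simps)
  also have "\<dots> = al r * (pow1 z (Suc r) (c @ e) - pow1 z (Suc r) (a @ b))"
    using pow_l[OF ce(2)] pow_r[OF ab(2)] by simp
  also have "\<dots> = 0" using eq by simp
  finally have "C1 g x = 0" .
  then show ?thesis by (simp add: g_def)
qed

end

lemma sj0: "(\<Sum>j\<le>length v. (if take j v = [] then F j else 0)) = (F 0 :: 'a::comm_monoid_add)"
  by (subst sum_single[where a=0]) auto

lemma sjn: "(\<Sum>j\<le>length v. (if drop j v = [] then F j else 0)) = (F (length v) :: 'a::comm_monoid_add)"
  by (subst sum_single[where a="length v"]) auto

lemma mult2_Zl:
  "mult2 (\<lambda>(x, v). (if v = [] then z x else 0) + (if x = [] then z v else 0)) u (x, v)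
   = mult1 z (\<lambda>y. u (y, v)) x + mult1 z (\<lambda>y. u (x, y)) v"
proof -
  have "mult2 (\<lambda>(x, v). (if v = [] then z x else 0) + (if x = [] then z v else 0)) u (x, v)
    = (\<Sum>i\<le>length x. \<Sum>j\<le>length v.
         (if take j v = [] then z (take i x) * u (drop i x, drop j v) else 0)
       + (if take i x = [] then z (take j v) * u (drop i x, drop j v) else 0))"
    unfolding mult2_def by (intro sum.cong refl; simp add: distrib_right)
  also have "\<dots> = (\<Sum>i\<le>length x. \<Sum>j\<le>length v.
         (if take j v = [] then z (take i x) * u (drop i x, drop j v) else 0))
     + (\<Sum>j\<le>length v. \<Sum>i\<le>length x.
         (if take i x = [] then z (take j v) * u (drop i x, drop j v) else 0))"
    by (simp add: sum.distrib sum.swap[where A="{..length x}"])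
  also have "\<dots> = mult1 z (\<lambda>y. u (y, v)) x + mult1 z (\<lambda>y. u (x, y)) v"
    unfolding mult1_def by (simp only: sj0) simp
  finally show ?thesis .
qed

lemma mult2_Zr:
  "mult2 u (\<lambda>(x, v). (if v = [] then z x else 0) + (if x = [] then z v else 0)) (x, v)
   = mult1 (\<lambda>y. u (y, v)) z x + mult1 (\<lambda>y. u (x, y)) z v"
proof -
  have "mult2 u (\<lambda>(x, v). (if v = [] then z x else 0) + (if x = [] then z v else 0)) (x, v)
    = (\<Sum>i\<le>length x. \<Sum>j\<le>length v.
         (if drop j v = [] then u (take i x, take j v) * z (drop i x) else 0)
       + (if drop i x = [] then u (take i x, take j v) * z (drop j v) else 0))"
    unfolding mult2_def by (intro sum.cong refl; simp add: distrib_left)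
  also have "\<dots> = (\<Sum>i\<le>length x. \<Sum>j\<le>length v.
         (if drop j v = [] then u (take i x, take j v) * z (drop i x) else 0))
     + (\<Sum>j\<le>length v. \<Sum>i\<le>length x.
         (if drop i x = [] then u (take i x, take j v) * z (drop j v) else 0))"
    by (simp add: sum.distrib sum.swap[where A="{..length x}"])
  also have "\<dots> = mult1 (\<lambda>y. u (y, v)) z x + mult1 (\<lambda>y. u (x, y)) z v"
    unfolding mult1_def by (simp only: sjn) simp
  finally show ?thesis .
qed



context HZ begin

lemma Delta_Z2: "Delta z = (\<lambda>(x, v). (if v = [] then z x else 0) + (if x = [] then z v else 0))"
proof (rule ext)
  fix xv :: "'b list \<times> 'b list"
  show "Delta z xv = (\<lambda>(x, v). (if v = [] then z x else 0) + (if x = [] then z v else 0)) xv"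
    by (cases xv) (simp add: Delta_z)
qed

lemma comm_iff:
  "mult2 (Delta z) u = mult2 u (Delta z) \<longleftrightarrow>
   (\<forall>x v. C1 (\<lambda>y. u (y, v)) x + C1 (\<lambda>y. u (x, y)) v = 0)"
proof -
  have "mult2 (Delta z) u = mult2 u (Delta z) \<longleftrightarrow> (\<forall>x v. mult2 (Delta z) u (x, v) = mult2 u (Delta z) (x, v))"
    by (auto simp: fun_eq_iff)
  also have "\<dots> \<longleftrightarrow> (\<forall>x v. C1 (\<lambda>y. u (y, v)) x + C1 (\<lambda>y. u (x, y)) v = 0)"
    unfolding Delta_Z2 mult2_Zl mult2_Zr C1_def by (simp add: algebra_simps)
  finally show ?thesis .
qed

lemma slices:
  assumes E: "\<forall>x v. C1 (\<lambda>y. u (y, v)) x + C1 (\<lambda>y. u (x, y)) v = 0"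
  shows "\<forall>v x. C1 (\<lambda>y. u (y, v)) x = 0"
proof -
  have "\<forall>v. length v = q \<longrightarrow> (\<forall>x. C1 (\<lambda>y. u (y, v)) x = 0)" for q
  proof (induction q rule: less_induct)
    case (less q)
    show ?case
    proof (intro allI impI)
      fix v x :: "'b list" assume vq: "length v = q"
      show "C1 (\<lambda>y. u (y, v)) x = 0"
      proof (cases "length x < d")
        case True then show ?thesis by (rule C1_short)
      next
        case False
        define n where "n = length x - d"
        define P where "P = pow1 z (n div d + 1)"
        define cc where "cc y = (SOME c. \<forall>x'. length x' = n + d \<longrightarrow> u (x', y) = c * P x')" for y
        define lam where "lam = - C1 cc v"
        have H: "\<forall>x'. length x' = n + d \<longrightarrow> C1 (\<lambda>y. u (y, v)) x' = lam * P x'"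
        proof (intro allI impI)
          fix x' :: "'b list" assume x'l: "length x' = n + d"
          have "C1 (\<lambda>y. u (y, v)) x' + C1 (\<lambda>y. u (x', y)) v = 0" using E by blast
          then have e1: "C1 (\<lambda>y. u (y, v)) x' = - C1 (\<lambda>y. u (x', y)) v"
            by (simp add: eq_neg_iff_add_eq_0)
          show "C1 (\<lambda>y. u (y, v)) x' = lam * P x'"
          proof (cases "length v < d")
            case True
            then show ?thesis using e1 C1_short lam_def by simp
          next
            case False
            have cc: "u (x', y) = cc y * P x'" if yl: "length y = q - d" for y
            proof -
              have "q - d < q" using False vq dpos by simp
              then have "\<forall>x. C1 (\<lambda>y'. u (y', y)) x = 0" using less.IH yl by blast
              then have "\<exists>c. \<forall>x'. length x' = n + d \<longrightarrow> u (x', y) = c * pow1 z ((n + d) div d) x'"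
                by (rule comm0)
              moreover have "(n + d) div d = n div d + 1" using div_add_self2[of d n] dpos by simp
              ultimately have "\<exists>c. \<forall>x'. length x' = n + d \<longrightarrow> u (x', y) = c * P x'"
                unfolding P_def by simp
              then have "\<forall>x'. length x' = n + d \<longrightarrow> u (x', y) = cc y * P x'"
                unfolding cc_def by (rule someI_ex)
              then show ?thesis using x'l by blast
            qed
            obtain c e where ce: "v = c @ e" "length c = d" using split_l[of v] False by auto
            obtain a b where ab: "v = a @ b" "length b = d" using split_r[of v] False by auto
            have l1: "length v = length c + length e" using ce(1) by simp
            have l2: "length v = length a + length b" using ab(1) by simp
            have le: "length e = q - d" "length a = q - d" using l1 l2 ce(2) ab(2) vq by auto
            have eq: "c @ e = a @ b" using ce(1) ab(1) by simp
            have X: "C1 cc v = z c * cc e - cc a * z b"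
              using C1_app[OF ce(2) ab(2) eq] ce(1) by simp
            have "C1 (\<lambda>y. u (x', y)) v = z c * u (x', e) - u (x', a) * z b"
              using C1_app[OF ce(2) ab(2) eq] ce(1) by simp
            also have "\<dots> = (z c * cc e - cc a * z b) * P x'"
              using cc[OF le(1)] cc[OF le(2)] by (simp add: algebra_simps)
            also have "\<dots> = C1 cc v * P x'" using X by simp
            finally show ?thesis using e1 lam_def by simp
          qed
        qed
        have xl: "length x = n + d" using False n_def by simp
        from G[OF H[unfolded P_def]] have L: "d dvd n \<longrightarrow> lam = 0" by blast
        show ?thesis
        proof (cases "d dvd n")
          case True then show ?thesis using H xl L by simp
        next
          case nd: False
          have "P x = 0"
          proof (rule ccontr)
            assume "P x \<noteq> 0"
            then have "length x = (n div d + 1) * d" using pow_supp[of "n div d + 1" x] unfolding P_def by blast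
            then have "n = n div d * d" using xl by (simp add: algebra_simps)
            then have "d dvd n" by (metis dvd_triv_right)
            then show False using nd by simp
          qed
          then show ?thesis using H xl by simp
        qed
      qed
    qed
  qed
  then show ?thesis by blast
qed

lemma pz: "l \<noteq> length v div d \<Longrightarrow> pow1 z l v = 0"
proof (rule ccontr)
  assume "l \<noteq> length v div d" "pow1 z l v \<noteq> 0"
  then have "length v = l * d" using pow_supp by simp
  then show False using \<open>l \<noteq> length v div d\<close> dpos by simp
qed

lemma pser2_closed:
  "pser2 c z (x, v) = c (length x div d) (length v div d) * pow1 z (length x div d) x
     * pow1 z (length v div d) v"
proof -
  define K where "K = length x div d"
  define L where "L = length v div d"
  have KL: "K \<le> length x" "L \<le> length v" unfolding K_def L_def by simp_all
  have inner: "(\<Sum>l\<le>length v. c k l * pow1 z k x * pow1 z l v) = c k L * pow1 z k x * pow1 z L v" for k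
    by (rule sum_single) (use KL pz L_def in auto)
  have "pser2 c z (x, v) = (\<Sum>k\<le>length x. c k L * pow1 z k x * pow1 z L v)"
    unfolding pser2_def by (simp add: inner)
  also have "\<dots> = c K L * pow1 z K x * pow1 z L v"
    by (rule sum_single) (use KL pz K_def in auto)
  finally show ?thesis unfolding K_def L_def .
qed

lemma pser_commutes: "mult2 (Delta z) (pser2 c z) = mult2 (pser2 c z) (Delta z)"
  unfolding comm_iff
proof (intro allI)
  fix x v :: "'b list"
  have f1: "(\<lambda>y. pser2 c z (y, v)) = (\<lambda>y. (\<lambda>k. c k (length v div d) * pow1 z (length v div d) v)
      (length y div d) * pow1 z (length y div d) y)"
    by (rule ext) (simp add: pser2_closed algebra_simps)
  have f2: "(\<lambda>y. pser2 c z (x, y)) = (\<lambda>y. (\<lambda>k. c (length x div d) k * pow1 z (length x div d) x)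
      (length y div d) * pow1 z (length y div d) y)"
    by (rule ext) (simp add: pser2_closed algebra_simps)
  show "C1 (\<lambda>y. pser2 c z (y, v)) x + C1 (\<lambda>y. pser2 c z (x, y)) v = 0"
    unfolding f1 f2
    using C1_closed[of "\<lambda>k. c k (length v div d) * pow1 z (length v div d) v" x]
      C1_closed[of "\<lambda>k. c (length x div d) k * pow1 z (length x div d) x" v] by simp
qed

lemma commuting_is_pser:
  assumes "mult2 (Delta z) u = mult2 u (Delta z)"
  shows "\<exists>c. u = pser2 c z"
proof -
  have E: "\<forall>x v. C1 (\<lambda>y. u (y, v)) x + C1 (\<lambda>y. u (x, y)) v = 0" using assms comm_iff by blast
  have S1: "\<forall>v x. C1 (\<lambda>y. u (y, v)) x = 0" using slices[OF E] .
  have S2: "\<forall>x v. C1 (\<lambda>y. u (x, y)) v = 0" using E S1 by simp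
  define c where "c k l = u (pw k, pw l) / ((z p) ^ k * (z p) ^ l)" for k l
  have "u (x, v) = pser2 c z (x, v)" for x v
  proof -
    define K where "K = length x div d"
    define L where "L = length v div d"
    have A: "\<exists>a. \<forall>x'. length x' = length x \<longrightarrow> u (x', v) = a * pow1 z K x'"
      unfolding K_def by (rule comm0) (use S1 in blast)
    have B: "\<exists>a. \<forall>v'. length v' = length v \<longrightarrow> u (x', v') = a * pow1 z L v'" for x'
      unfolding L_def by (rule comm0) (use S2 in blast)
    show ?thesis
    proof (cases "pow1 z K x = 0 \<or> pow1 z L v = 0")
      case True
      have "u (x, v) = 0"
      proof (cases "pow1 z K x = 0")
        case True then show ?thesis using A by auto
      next
        case False
        then have "pow1 z L v = 0" using \<open>pow1 z K x = 0 \<or> pow1 z L v = 0\<close> by simp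
        then show ?thesis using B[of x] by auto
      qed
      then show ?thesis using True pser2_closed K_def L_def by auto
    next
      case False
      have lx: "length x = length (pw K)" using False pow_supp pw_len by auto
      have lv: "length v = length (pw L)" using False pow_supp pw_len by auto
      have zk: "(z p) ^ K \<noteq> 0" "(z p) ^ L \<noteq> 0" using pnz by simp_all
      have r1: "u (x, v) = u (pw K, v) / (z p) ^ K * pow1 z K x"
        using ratio[OF A lx[symmetric] pw_nz[of K]] pw_val by simp
      have r2: "u (pw K, v) = u (pw K, pw L) / (z p) ^ L * pow1 z L v"
        using ratio[OF B[of "pw K"] lv[symmetric] pw_nz[of L]] pw_val by simp
      show ?thesis
        unfolding pser2_closed K_def[symmetric] L_def[symmetric] r1 r2 c_def
        using zk by (simp add: field_simps)
    qed
  qed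
  then have "u = pser2 c z" by (auto simp: fun_eq_iff)
  then show ?thesis by blast
qed

lemma main: "{u. mult2 (Delta z) u = mult2 u (Delta z)} = {pser2 c z | c. True}"
  using commuting_is_pser pser_commutes by blast

end

theorem lemma3p6:
  fixes z :: "'b::finite list \<Rightarrow> 'k::field_char_0"
  assumes "(in_V z \<and> z \<noteq> (\<lambda>_. 0)) \<or> (in_wedge2 z \<and> z \<noteq> (\<lambda>_. 0))"
  shows "{u. mult2 (Delta z) u = mult2 u (Delta z)} = {pser2 c z | c. True}"
  using assms
proof
  assume h: "in_V z \<and> z \<noteq> (\<lambda>_. 0)"
  then obtain w where w: "z w \<noteq> 0" by (auto simp: fun_eq_iff)
  have hom: "\<And>w. length w \<noteq> 1 \<Longrightarrow> z w = 0" using h by (simp add: in_V_def)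
  then have lw: "length w = 1" using w by blast
  interpret HZ z 1 w
  proof (unfold_locales)
    show "\<And>w. length w \<noteq> 1 \<Longrightarrow> z w = 0" by (rule hom)
    show "0 < (1::nat)" by simp
    show "length w = 1" by (rule lw)
    show "z w \<noteq> 0" by (rule w)
    show "1 = 1 \<or> (1 = (2::nat) \<and> (\<forall>a b. z [a, b] = - z [b, a]))" by simp
  qed
  show ?thesis by (rule main)
next
  assume h: "in_wedge2 z \<and> z \<noteq> (\<lambda>_. 0)"
  then obtain w where w: "z w \<noteq> 0" by (auto simp: fun_eq_iff)
  have hom: "\<And>w. length w \<noteq> 2 \<Longrightarrow> z w = 0" using h unfolding in_wedge2_def by blast
  then have lw: "length w = 2" using w by blast
  have anti: "\<forall>a b. z [a, b] = - z [b, a]" using h unfolding in_wedge2_def by blast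
  interpret HZ z 2 w
  proof (unfold_locales)
    show "\<And>w. length w \<noteq> 2 \<Longrightarrow> z w = 0" by (rule hom)
    show "0 < (2::nat)" by simp
    show "length w = 2" by (rule lw)
    show "z w \<noteq> 0" by (rule w)
    show "2 = 1 \<or> (2 = (2::nat) \<and> (\<forall>a b. z [a, b] = - z [b, a]))" using anti by blast
  qed
  show ?thesis by (rule main)
qed

end
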